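(* (i) Let $x\in[0,1]$ admit an infinite OOCF expansion $((a_n,\varepsilon_n))_{n\ge1}$ that is eventually periodic. Then $x$ is either an $\infty$-rational or a quadratic irrational. (ii) If $x\in(0,1)$ is a quadratic irrational, then its OOCF expansion is eventually periodic.
   Context: Rationals are written $p/q$ with $p\in\mathbb Z$, $q\in\mathbb N$, $\gcd(p,q)=1$; $p/q$ is an $\infty$-rational if $p$ and $q$ have different parity (e.g. $0=0/1$). A quadratic irrational is an irrational real root of a quadratic polynomial with integer coefficients. Admissible digits: $D=\{(1,1)\}\cup\{(a,\varepsilon): a\in\mathbb Z,\ a\ge2,\ \varepsilon\in\{-1,1\}\}$. For integers $k\ge1$ put $B(k+1,-1)=\left[\frac{k-1}{k},\frac{2k-1}{2k+1}\right]$ and $B(k,1)=\left[\frac{2k-1}{2k+1},\frac{k}{k+1}\right]$. The OOCF map $T:[0,1]\to[0,1]$ is $T(x)=\frac{kx-(k-1)}{k-(k+1)x}$ for $x\in B(k+1,-1)$, $T(x)=\frac{k-(k+1)x}{kx-(k-1)}$ for $x\in B(k,1)$ ($k\ge1$; the formulas agree at common endpoints), and $T(1)=1$. An infinite OOCF expansion of $x\in[0,1]$ is a sequence $((a_n,\varepsilon_n))_{n\ge1}$ in $D$ with $T^{n-1}(x)\in B(a_n,\varepsilon_n)$ and $T^{n-1}(x)\neq1$ for all $n\ge1$; an irrational $x\in(0,1)$ has exactly one, called its OOCF expansion. *)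

theory Defs
  imports Complex_Main
begin

definition OOCF_digit :: "int \<times> int \<Rightarrow> bool" where
  "OOCF_digit d \<longleftrightarrow> d = (1, 1) \<or> (fst d \<ge> 2 \<and> (snd d = -1 \<or> snd d = 1))"

definition OOCF_B :: "int \<times> int \<Rightarrow> real set" where
  "OOCF_B d = (let a = fst d; e = snd d in
     if e = -1 then (let k = real_of_int (a - 1) in {(k - 1) / k .. (2*k - 1) / (2*k + 1)})
     else (let k = real_of_int a in {(2*k - 1) / (2*k + 1) .. k / (k + 1)}))"

(* For x \<in> [0,1), the integer k \<ge> 1 with
   x \<in> B(k+1,-1) \<union> B(k,1) = [(k-1)/k, k/(k+1)] is floor(1/(1-x))
   (at the common endpoint k/(k+1) both adjacent formulas agree). *)
definition OOCF_T :: "real \<Rightarrow> real" where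
  "OOCF_T x = (if x = 1 then 1 else
     (let k = real_of_int \<lfloor>1 / (1 - x)\<rfloor> in
      if x \<le> (2*k - 1) / (2*k + 1)
      then (k * x - (k - 1)) / (k - (k + 1) * x)
      else (k - (k + 1) * x) / (k * x - (k - 1))))"

(* ((a_n,e_n))_{n\<ge>1} is an infinite OOCF expansion of x (index 0 unused) *)
definition is_OOCF_expansion :: "real \<Rightarrow> (nat \<Rightarrow> int \<times> int) \<Rightarrow> bool" where
  "is_OOCF_expansion x e \<longleftrightarrow>
     (\<forall>n\<ge>1. OOCF_digit (e n) \<and> (OOCF_T ^^ (n - 1)) x \<in> OOCF_B (e n)
             \<and> (OOCF_T ^^ (n - 1)) x \<noteq> 1)"

definition eventually_periodic :: "(nat \<Rightarrow> 'a) \<Rightarrow> bool" where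
  "eventually_periodic e \<longleftrightarrow> (\<exists>N p. p > 0 \<and> (\<forall>n\<ge>N. e (n + p) = e n))"

definition inf_rational :: "real \<Rightarrow> bool" where
  "inf_rational x \<longleftrightarrow> (\<exists>p q :: int. q > 0 \<and> coprime p q \<and> odd (p + q) \<and> x = of_int p / of_int q)"

definition quadratic_irrational :: "real \<Rightarrow> bool" where
  "quadratic_irrational x \<longleftrightarrow> x \<notin> \<rat> \<and>
     (\<exists>a b c :: int. a \<noteq> 0 \<and> of_int a * x^2 + of_int b * x + of_int c = 0)"

end

theory Submission imports Defs begin

lemma negB_facts:
  fixes k z :: real
  assumes k: "k \<ge> 1" and z1: "(k-1)/k \<le> z" and z2: "z \<le> (2*k-1)/(2*k+1)"
  shows "k*z \<ge> k - 1" "(2*k+1)*z \<le> 2*k-1"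
  using z1 z2 k by (simp_all add: field_simps)

lemma negB_den:
  fixes k z :: real
  assumes k: "k \<ge> 1" and z1: "k*z \<ge> k - 1" and z2: "(2*k+1)*z \<le> 2*k-1"
  shows "k - (k+1)*z > 0" "k*(k - (k+1)*z) \<le> 1"
proof -
  have "(2*k+1)*(k - (k+1)*z) = 2*k*k + k - (k+1)*((2*k+1)*z)" by (simp add: algebra_simps)
  also have "\<dots> \<ge> 2*k*k + k - (k+1)*(2*k-1)" using z2 k by (intro diff_left_mono mult_left_mono) auto
  finally have "(2*k+1)*(k - (k+1)*z) \<ge> 1" by (simp add: algebra_simps)
  then show "k - (k+1)*z > 0" using k by (smt (verit) mult_nonneg_nonpos)
  have "k*(k - (k+1)*z) = k*k - (k+1)*(k*z)" by (simp add: algebra_simps)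
  also have "\<dots> \<le> k*k - (k+1)*(k-1)" using z1 k by (intro diff_left_mono mult_left_mono) auto
  finally show "k*(k - (k+1)*z) \<le> 1" by (simp add: algebra_simps)
qed

lemma posB_facts:
  fixes k z :: real
  assumes k: "k \<ge> 1" and z1: "(2*k-1)/(2*k+1) \<le> z" and z2: "z \<le> k/(k+1)"
  shows "(2*k+1)*z \<ge> 2*k-1" "(k+1)*z \<le> k"
  using z1 z2 k by (simp_all add: field_simps)

lemma posB_den:
  fixes k z :: real
  assumes k: "k \<ge> 1" and z1: "(2*k+1)*z \<ge> 2*k-1" and z2: "(k+1)*z \<le> k"
  shows "k*z - (k-1) > 0" "(k+1)*(k*z - (k-1)) \<le> 1"
proof -
  have "(2*k+1)*(k*z - (k-1)) = k*((2*k+1)*z) - (2*k+1)*(k-1)" by (simp add: algebra_simps)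
  also have "\<dots> \<ge> k*(2*k-1) - (2*k+1)*(k-1)" using z1 k by (intro diff_right_mono mult_left_mono) auto
  finally have "(2*k+1)*(k*z - (k-1)) \<ge> 1" by (simp add: algebra_simps)
  then show "k*z - (k-1) > 0" using k by (smt (verit) mult_nonneg_nonpos)
  have "(k+1)*(k*z - (k-1)) = k*((k+1)*z) - (k+1)*(k-1)" by (simp add: algebra_simps)
  also have "\<dots> \<le> k*k - (k+1)*(k-1)" using z2 k by (intro diff_right_mono mult_left_mono) auto
  finally show "(k+1)*(k*z - (k-1)) \<le> 1" by (simp add: algebra_simps)
qed

definition mA :: "int \<times> int \<Rightarrow> int" where "mA d = (if snd d = -1 then fst d - 1 else -(fst d + 1))"
definition mB :: "int \<times> int \<Rightarrow> int" where "mB d = (if snd d = -1 then 2 - fst d else fst d)"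
definition mC :: "int \<times> int \<Rightarrow> int" where "mC d = (if snd d = -1 then - fst d else fst d)"
definition mD :: "int \<times> int \<Rightarrow> int" where "mD d = (if snd d = -1 then fst d - 1 else 1 - fst d)"
definition den :: "int \<times> int \<Rightarrow> real \<Rightarrow> real" where "den d z = of_int (mC d) * z + of_int (mD d)"
definition brf :: "int \<times> int \<Rightarrow> real \<Rightarrow> real" where "brf d z = (of_int (mA d) * z + of_int (mB d)) / den d z"

lemma det_abs: "\<bar>mA d * mD d - mB d * mC d\<bar> = 1"
  by (auto simp: mA_def mB_def mC_def mD_def algebra_simps)

lemma digit_cases:
  assumes "OOCF_digit d"
  obtains a where "a \<ge> 2" "d = (a,-1)" | a where "a \<ge> 1" "d = (a,1)"
  using assms unfolding OOCF_digit_def by (cases d) auto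

lemma B_neg: "z \<in> OOCF_B (a,-1) \<longleftrightarrow> (of_int a - 2)/(of_int a - 1) \<le> z \<and> z \<le> (2*(of_int a - 1) - 1)/(2*(of_int a - 1)+1)"
  by (simp add: OOCF_B_def Let_def algebra_simps)

lemma B_pos: "z \<in> OOCF_B (a,1) \<longleftrightarrow> (2*of_int a - 1)/(2*of_int a + 1) \<le> z \<and> z \<le> of_int a/(of_int a+1)"
  by (simp add: OOCF_B_def Let_def)

lemma aux_le: "0 < D \<Longrightarrow> c \<le> k \<Longrightarrow> k*D \<le> 1 \<Longrightarrow> c*D \<le> (1::real)"
proof -
  assume a: "0 < D" "c \<le> k" "k*D \<le> 1"
  have "c*D \<le> k*D" using a by (intro mult_right_mono) auto
  then show ?thesis using a by linarith
qed

lemma den_facts: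
  assumes d: "OOCF_digit d" and z: "z \<in> OOCF_B d"
  shows "0 < den d z" "den d z \<le> 1" "d \<noteq> (2,-1) \<Longrightarrow> den d z \<le> 1/2"
        "0 < z \<Longrightarrow> den d z < 1" "0 \<le> z" "z \<le> 1"
proof -
  have "0 < den d z \<and> den d z \<le> 1 \<and> (d \<noteq> (2,-1) \<longrightarrow> den d z \<le> 1/2)
        \<and> (0 < z \<longrightarrow> den d z < 1) \<and> 0 \<le> z \<and> z \<le> 1"
  using d proof (cases rule: digit_cases)
    case (1 a)
    define k where "k = real_of_int a - 1"
    have k: "k \<ge> 1" using 1 k_def by simp
    have "z \<in> OOCF_B (a,-1)" using z 1 by simp
    then have zz: "(k-1)/k \<le> z" "z \<le> (2*k-1)/(2*k+1)" by (simp_all add: OOCF_B_def Let_def k_def)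
    note f = negB_facts[OF k zz]
    note g = negB_den[OF k f]
    have dd: "den d z = k - (k+1)*z" using 1 by (simp add: den_def mC_def mD_def k_def algebra_simps)
    have "0 \<le> k*z" using f k by linarith
    then have z0: "0 \<le> z" using k by (simp add: zero_le_mult_iff)
    show ?thesis
    proof (intro conjI impI)
      show "0 < den d z" using g dd by simp
      show "den d z \<le> 1" using aux_le[of "den d z" 1 k] g k dd by simp
      show "den d z \<le> 1/2" if "d \<noteq> (2,-1)"
      proof -
        have "a \<ge> 3" using that 1 by auto
        then have "k \<ge> 2" using k_def by simp
        then show ?thesis using aux_le[of "den d z" 2 k] g dd by simp
      qed
      show "den d z < 1" if "0 < z"
      proof (cases "k = 1")
        case True then show ?thesis using dd that by simp
      next
        case False
        then have "k \<ge> 2" using 1 k_def by simp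
        then show ?thesis using aux_le[of "den d z" 2 k] g dd by simp
      qed
      show "0 \<le> z" by fact
      have "(2*k+1)*z < (2*k+1)*1" using f k by (smt (verit))
      then show "z \<le> 1" using k mult_less_cancel_left_pos[of "2*k+1" z 1] by simp
    qed
  next
    case (2 a)
    define k where "k = real_of_int a"
    have k: "k \<ge> 1" using 2 k_def by simp
    have "z \<in> OOCF_B (a,1)" using z 2 by simp
    then have zz: "(2*k-1)/(2*k+1) \<le> z" "z \<le> k/(k+1)" by (simp_all add: OOCF_B_def Let_def k_def)
    note f = posB_facts[OF k zz]
    note g = posB_den[OF k f]
    have dd: "den d z = k*z - (k-1)" using 2 by (simp add: den_def mC_def mD_def k_def algebra_simps)
    have h: "den d z \<le> 1/2" using aux_le[of "den d z" 2 "k+1"] g dd k by simp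
    have "0 \<le> (2*k+1)*z" using f k by linarith
    then have z0: "0 \<le> z" using k by (simp add: zero_le_mult_iff)
    have "(k+1)*z < (k+1)*1" using f k by (smt (verit))
    then have z1: "z \<le> 1" using k mult_less_cancel_left_pos[of "k+1" z 1] by simp
    show ?thesis using g dd h z0 z1 by simp
  qed
  then show "0 < den d z" "den d z \<le> 1" "d \<noteq> (2,-1) \<Longrightarrow> den d z \<le> 1/2"
        "0 < z \<Longrightarrow> den d z < 1" "0 \<le> z" "z \<le> 1" by auto
qed

lemma brf_diff:
  assumes "den d u \<noteq> 0" "den d v \<noteq> 0"
  shows "brf d u - brf d v = of_int (mA d * mD d - mB d * mC d) * (u - v) / (den d u * den d v)"
  using assms unfolding brf_def den_def by (simp add: field_simps)

lemma T_eq: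
  assumes d: "OOCF_digit d" and z: "z \<in> OOCF_B d" and z1: "z \<noteq> 1"
  shows "OOCF_T z = brf d z"
proof -
  have zl: "z < 1" using den_facts[OF d z] z1 by simp
  then have omz: "1 - z > 0" by simp
  show ?thesis
  using d proof (cases rule: digit_cases)
    case (1 a)
    define k where "k = real_of_int a - 1"
    have k: "k \<ge> 1" using 1 k_def by simp
    have "z \<in> OOCF_B (a,-1)" using z 1 by simp
    then have zz: "(k-1)/k \<le> z" "z \<le> (2*k-1)/(2*k+1)" by (simp_all add: OOCF_B_def Let_def k_def)
    note f = negB_facts[OF k zz]
    have "k \<le> 1/(1-z)" using f k omz by (simp add: field_simps)
    moreover have "1/(1-z) < k + 1" using f k omz by (simp add: field_simps)
    ultimately have fl: "\<lfloor>1/(1-z)\<rfloor> = a - 1" using k_def by (simp add: floor_eq_iff)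
    have kk: "real_of_int (a - 1) = k" using k_def by simp
    show ?thesis using z1 zz(2) unfolding OOCF_T_def fl kk Let_def
      using 1 by (simp add: brf_def den_def mA_def mB_def mC_def mD_def k_def algebra_simps)
  next
    case (2 a)
    define k where "k = real_of_int a"
    have k: "k \<ge> 1" using 2 k_def by simp
    have "z \<in> OOCF_B (a,1)" using z 2 by simp
    then have zz: "(2*k-1)/(2*k+1) \<le> z" "z \<le> k/(k+1)" by (simp_all add: OOCF_B_def Let_def k_def)
    note f = posB_facts[OF k zz]
    have bd: "brf d z = (k - (k+1)*z) / (k*z - (k-1))"
      using 2 by (simp add: brf_def den_def mA_def mB_def mC_def mD_def k_def algebra_simps)
    show ?thesis
    proof (cases "z = k/(k+1)")
      case True
      have zz': "z*(k+1) = k" using True k by (simp add: field_simps)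
      have "1/(1-z) = k + 1" using zz' omz by (simp add: field_simps)
      then have fl: "\<lfloor>1/(1-z)\<rfloor> = a + 1" using k_def by simp
      have kk: "real_of_int (a + 1) = k + 1" using k_def by simp
      have c: "z \<le> (2*(k+1)-1)/(2*(k+1)+1)" using zz' zl k by (simp add: field_simps)
      have "OOCF_T z = ((k+1)*z - k) / ((k+1) - (k+2)*z)"
        using z1 c unfolding OOCF_T_def fl kk Let_def by (simp add: algebra_simps)
      also have "\<dots> = 0" using zz' by (simp add: algebra_simps)
      also have "\<dots> = brf d z" using bd zz' by (simp add: algebra_simps)
      finally show ?thesis .
    next
      case False
      then have zlt: "z < k/(k+1)" using zz by simp
      then have "(k+1)*z < k" using k by (simp add: field_simps)
      have "k \<le> 1/(1-z)" using f k omz by (simp add: field_simps)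
      moreover have "1/(1-z) < k + 1" using `(k+1)*z < k` k omz by (simp add: field_simps)
      ultimately have fl: "\<lfloor>1/(1-z)\<rfloor> = a" using k_def by (simp add: floor_eq_iff)
      show ?thesis
      proof (cases "z \<le> (2*k-1)/(2*k+1)")
        case True
        then have "z = (2*k-1)/(2*k+1)" using zz by simp
        then have ze: "z*(2*k+1) = 2*k-1" using k by (simp add: field_simps)
        have "OOCF_T z = (k*z - (k-1)) / (k - (k+1)*z)"
          using z1 True unfolding OOCF_T_def fl k_def[symmetric] Let_def by simp
        also have "\<dots> = 1"
        proof -
          have "k - (k+1)*z = k*z - (k-1)" using ze by (simp add: algebra_simps)
          moreover have "k*z - (k-1) > 0" using posB_den[OF k f] by simp
          ultimately show ?thesis by simp
        qed
        also have "\<dots> = brf d z"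
        proof -
          have "k - (k+1)*z = k*z - (k-1)" using ze by (simp add: algebra_simps)
          moreover have "k*z - (k-1) > 0" using posB_den[OF k f] by simp
          ultimately show ?thesis using bd by simp
        qed
        finally show ?thesis .
      next
        case False
        then show ?thesis using z1 bd unfolding OOCF_T_def fl k_def[symmetric] Let_def by simp
      qed
    qed
  qed
qed

lemma frac_out:
  fixes N D :: real
  assumes "(N<0 \<and> D>0) \<or> (N>0 \<and> D<0) \<or> (D>0 \<and> N>D)"
  shows "N/D < 0 \<or> N/D > 1"
  using assms by (auto simp: divide_neg_pos divide_pos_neg less_divide_eq)

lemma brf_neg_form: "a \<ge> 2 \<Longrightarrow> k = real_of_int a - 1 \<Longrightarrow>
   brf (a,-1) z = (k*z - (k-1)) / (k - (k+1)*z) \<and> den (a,-1) z = k - (k+1)*z"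
  by (simp only:) (simp add: brf_def den_def mA_def mB_def mC_def mD_def algebra_simps)

lemma brf_pos_form: "k = real_of_int a \<Longrightarrow>
   brf (a,1) z = (k - (k+1)*z) / (k*z - (k-1)) \<and> den (a,1) z = k*z - (k-1)"
  by (simp add: brf_def den_def mA_def mB_def mC_def mD_def algebra_simps)

lemma out1:
  assumes d: "OOCF_digit d" and z: "z < 0 \<or> z > 1"
  shows "brf d z < 0" "den d z \<noteq> 0"
proof -
  have "brf d z < 0 \<and> den d z \<noteq> 0"
  using d proof (cases rule: digit_cases)
    case (1 a)
    define k where "k = real_of_int a - 1"
    have k: "k \<ge> 1" using 1 k_def by simp
    note F = brf_neg_form[OF 1(1) k_def, of z]
    show ?thesis
    proof (cases "z < 0")
      case True
      have "k*z < 0" using True k by (simp add: mult_pos_neg)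
      then have "k*z - (k-1) < 0" "k - (k+1)*z > 0" using k True by (auto simp: algebra_simps)
      then show ?thesis using F 1 by (simp add: divide_neg_pos)
    next
      case False
      then have z1: "z > 1" using z by simp
      have "k*z > k*1" using z1 k by (intro mult_strict_left_mono) auto
      then have "k*z - (k-1) > 0" by simp
      moreover have "k - (k+1)*z < 0" using `k*z > k*1` z1 by (simp add: algebra_simps)
      ultimately show ?thesis using F 1 by (simp add: divide_pos_neg)
    qed
  next
    case (2 a)
    define k where "k = real_of_int a"
    have k: "k \<ge> 1" using 2 k_def by simp
    note F = brf_pos_form[OF k_def, of z]
    show ?thesis
    proof (cases "z < 0")
      case True
      have "k*z < 0" using True k by (simp add: mult_pos_neg)
      then have "k - (k+1)*z > 0" "k*z - (k-1) < 0" using k True by (auto simp: algebra_simps)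
      then show ?thesis using F 2 by (simp add: divide_pos_neg)
    next
      case False
      then have z1: "z > 1" using z by simp
      have "k*z > k*1" using z1 k by (intro mult_strict_left_mono) auto
      then have "k*z - (k-1) > 0" by simp
      moreover have "k - (k+1)*z < 0" using `k*z > k*1` z1 by (simp add: algebra_simps)
      ultimately show ?thesis using F 2 by (simp add: divide_neg_pos)
    qed
  qed
  then show "brf d z < 0" "den d z \<noteq> 0" by auto
qed

lemma out2:
  assumes d: "OOCF_digit d" and z0: "0 \<le> z" and z1: "z \<le> 1" and nb: "z \<notin> OOCF_B d"
    and dn: "den d z \<noteq> 0"
  shows "brf d z < 0 \<or> brf d z > 1"
using d proof (cases rule: digit_cases)
  case (1 a)
  define k where "k = real_of_int a - 1"
  have k: "k \<ge> 1" using 1 k_def by simp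
  note F = brf_neg_form[OF 1(1) k_def, of z]
  have "z \<notin> OOCF_B (a,-1)" using nb 1 by simp
  then have "\<not> ((k-1)/k \<le> z \<and> z \<le> (2*k-1)/(2*k+1))" by (simp add: OOCF_B_def Let_def k_def)
  then have "k*z < k - 1 \<or> (2*k+1)*z > 2*k-1" using k by (auto simp: field_simps)
  then show ?thesis
  proof
    assume A: "k*z < k - 1"
    have "(k+1)*(k*z) < (k+1)*(k-1)" using A k by (intro mult_strict_left_mono) auto
    then have "k*(k - (k+1)*z) > 0" by (simp add: algebra_simps)
    then have "k - (k+1)*z > 0" using k by (simp add: zero_less_mult_iff)
    then show ?thesis using F A unfolding 1(2) by (intro frac_out[of "k*z - (k-1)" "k - (k+1)*z", unfolded F[THEN conjunct1, symmetric]]) auto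
  next
    assume B: "(2*k+1)*z > 2*k-1"
    have "k*((2*k+1)*z) > k*(2*k-1)" using B k by (intro mult_strict_left_mono) auto
    then have "(2*k+1)*(k*z) > (2*k+1)*(k-1)" by (simp add: algebra_simps)
    then have kz: "k*z > k - 1" using k mult_less_cancel_left_pos[of "2*k+1" "k-1" "k*z"] by simp
    have "k - (k+1)*z \<noteq> 0" using dn F 1 by simp
    then have "k - (k+1)*z > 0 \<or> k - (k+1)*z < 0" by linarith
    then show ?thesis using F kz B
      unfolding 1(2) by (intro frac_out[of "k*z - (k-1)" "k - (k+1)*z", unfolded F[THEN conjunct1, symmetric]]) (auto simp: algebra_simps)
  qed
next
  case (2 a)
  define k where "k = real_of_int a"
  have k: "k \<ge> 1" using 2 k_def by simp
  note F = brf_pos_form[OF k_def, of z]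
  have "z \<notin> OOCF_B (a,1)" using nb 2 by simp
  then have "\<not> ((2*k-1)/(2*k+1) \<le> z \<and> z \<le> k/(k+1))" by (simp add: OOCF_B_def Let_def k_def)
  then have "(2*k+1)*z < 2*k-1 \<or> (k+1)*z > k" using k by (auto simp: field_simps)
  then show ?thesis
  proof
    assume B: "(2*k+1)*z < 2*k-1"
    have "(k+1)*((2*k+1)*z) < (k+1)*(2*k-1)" using B k by (intro mult_strict_left_mono) auto
    then have "(2*k+1)*((k+1)*z) < (2*k+1)*k" by (simp add: algebra_simps)
    then have kz: "(k+1)*z < k" using k mult_less_cancel_left_pos[of "2*k+1" "(k+1)*z" k] by simp
    have "k*z - (k-1) \<noteq> 0" using dn F 2 by simp
    then have "k*z - (k-1) > 0 \<or> k*z - (k-1) < 0" by linarith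
    then show ?thesis using F kz B
      unfolding 2(2) by (intro frac_out[of "k - (k+1)*z" "k*z - (k-1)", unfolded F[THEN conjunct1, symmetric]]) (auto simp: algebra_simps)
  next
    assume A: "(k+1)*z > k"
    have "k*((k+1)*z) > k*k" using A k by (intro mult_strict_left_mono) auto
    then have "(k+1)*(k*z) > (k+1)*(k-1)" by (simp add: algebra_simps)
    then have kz: "k*z > k - 1" using k mult_less_cancel_left_pos[of "k+1" "k-1" "k*z"] by simp
    then show ?thesis using F A
      unfolding 2(2) by (intro frac_out[of "k - (k+1)*z" "k*z - (k-1)", unfolded F[THEN conjunct1, symmetric]]) (auto simp: algebra_simps)
  qed
qed

definition jd :: "int \<times> int \<Rightarrow> int" where
  "jd d = (if snd d = -1 then 2 * fst d - 2 else 2 * fst d + 1)"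

lemma jd_bounds:
  assumes d: "OOCF_digit d" and z: "z \<in> OOCF_B d" and q: "z \<notin> \<rat>"
  shows "of_int (jd d) < 2/(1-z) \<and> 2/(1-z) < of_int (jd d) + 1"
using d proof (cases rule: digit_cases)
  case (1 a)
  define k where "k = real_of_int a - 1"
  have k: "k \<ge> 1" using 1 k_def by simp
  have kq: "k \<in> \<rat>" using k_def by simp
  have "z \<in> OOCF_B (a,-1)" using z 1 by simp
  then have zz: "(k-1)/k \<le> z" "z \<le> (2*k-1)/(2*k+1)" by (simp_all add: OOCF_B_def Let_def k_def)
  have "(k-1)/k \<in> \<rat>" "(2*k-1)/(2*k+1) \<in> \<rat>" using kq by simp_all
  then have "(k-1)/k < z" "z < (2*k-1)/(2*k+1)" using zz q by (auto simp: order_le_less)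
  then have a1: "k*z > k - 1" "(2*k+1)*z < 2*k-1" using k by (simp_all add: field_simps)
  have zl: "1 - z > 0" using a1 k by (smt (verit) mult_le_cancel_left1)
  have "2*k < 2/(1-z)" using a1 zl by (simp add: field_simps)
  moreover have "2/(1-z) < 2*k+1" using a1 zl by (simp add: field_simps)
  moreover have "real_of_int (jd d) = 2*k" using 1 k_def by (simp add: jd_def)
  ultimately show ?thesis by simp
next
  case (2 a)
  define k where "k = real_of_int a"
  have k: "k \<ge> 1" using 2 k_def by simp
  have kq: "k \<in> \<rat>" using k_def by simp
  have "z \<in> OOCF_B (a,1)" using z 2 by simp
  then have zz: "(2*k-1)/(2*k+1) \<le> z" "z \<le> k/(k+1)" by (simp_all add: OOCF_B_def Let_def k_def)
  have "(2*k-1)/(2*k+1) \<in> \<rat>" "k/(k+1) \<in> \<rat>" using kq by simp_all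
  then have "(2*k-1)/(2*k+1) < z" "z < k/(k+1)" using zz q by (auto simp: order_le_less)
  then have a1: "(2*k+1)*z > 2*k-1" "(k+1)*z < k" using k by (simp_all add: field_simps)
  have zl: "1 - z > 0" using a1 k by (smt (verit) mult_le_cancel_left1)
  have "2*k+1 < 2/(1-z)" using a1 zl by (simp add: field_simps)
  moreover have "2/(1-z) < 2*k+2" using a1 zl by (simp add: field_simps)
  moreover have "real_of_int (jd d) = 2*k+1" using 2 k_def by (simp add: jd_def)
  ultimately show ?thesis by simp
qed

lemma digit_unique:
  assumes "OOCF_digit d1" "OOCF_digit d2" "z \<in> OOCF_B d1" "z \<in> OOCF_B d2" "z \<notin> \<rat>"
  shows "d1 = d2"
proof -
  have b1: "of_int (jd d1) < 2/(1-z) \<and> 2/(1-z) < of_int (jd d1) + 1" using jd_bounds assms by blast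
  have b2: "of_int (jd d2) < 2/(1-z) \<and> 2/(1-z) < of_int (jd d2) + 1" using jd_bounds assms by blast
  have "real_of_int (jd d1) < of_int (jd d2) + 1" "real_of_int (jd d2) < of_int (jd d1) + 1" using b1 b2 by linarith+
  then have "jd d1 < jd d2 + 1" "jd d2 < jd d1 + 1" by linarith+
  then have e: "jd d1 = jd d2" by simp
  show ?thesis using assms(1,2) e
    by (auto simp: OOCF_digit_def jd_def prod_eq_iff) presburger+
qed

lemma brf_rat: "z \<in> \<rat> \<Longrightarrow> brf d z \<in> \<rat>"
  by (simp add: brf_def den_def)

lemma rat_back:
  assumes dn: "den d z \<noteq> 0" and wq0: "brf d z \<in> \<rat>"
  shows "z \<in> \<rat>"
proof -
  define w where "w = brf d z"
  have wq: "w \<in> \<rat>" using wq0 w_def by simp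
  have eq: "w * den d z = of_int (mA d) * z + of_int (mB d)" using dn by (simp add: w_def brf_def)
  then have eq2: "z * (w * of_int (mC d) - of_int (mA d)) = of_int (mB d) - w * of_int (mD d)"
    by (simp add: den_def algebra_simps)
  show ?thesis
  proof (cases "w * of_int (mC d) - of_int (mA d) = 0")
    case False
    then have "z = (of_int (mB d) - w * of_int (mD d)) / (w * of_int (mC d) - of_int (mA d))"
      using eq2 by (simp add: field_simps)
    moreover have "(of_int (mB d) - w * of_int (mD d)) / (w * of_int (mC d) - of_int (mA d)) \<in> \<rat>"
      using wq by (intro Rats_divide Rats_diff Rats_mult Rats_of_int) auto
    ultimately show ?thesis by simp
  next
    case True
    then have "of_int (mB d) = w * of_int (mD d)" using eq2 by simp
    then have "real_of_int (mA d * mD d - mB d * mC d) = 0" using True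
      by (simp add: algebra_simps)
    then have "real_of_int (mA d * mD d) = real_of_int (mB d * mC d)" by simp
    then have "mA d * mD d = mB d * mC d" using of_int_eq_iff by blast
    then show ?thesis using det_abs[of d] by simp
  qed
qed

lemma quad_mob:
  fixes al be ga de A B C :: int and z w :: real
  assumes dn: "of_int ga * z + of_int de \<noteq> 0"
    and w: "w = (of_int al * z + of_int be) / (of_int ga * z + of_int de)"
    and det: "\<bar>al*de - be*ga\<bar> = 1" and A: "A \<noteq> 0"
    and eqw: "of_int A * w^2 + of_int B * w + of_int C = 0" and zq: "z \<notin> \<rat>"
  shows "\<exists>a b c :: int. a \<noteq> 0 \<and> of_int a * z^2 + of_int b * z + of_int c = 0"
proof -
  define a' where "a' = A*al^2 + B*al*ga + C*ga^2"
  define b' where "b' = 2*A*al*be + B*(al*de+be*ga) + 2*C*ga*de"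
  define c' where "c' = A*be^2 + B*be*de + C*de^2"
  have wd: "w * (of_int ga * z + of_int de) = of_int al * z + of_int be" using dn w by simp
  have "of_int a' * z^2 + of_int b' * z + of_int c' =
        (of_int ga * z + of_int de)^2 * (of_int A * w^2 + of_int B * w + of_int C)"
  proof -
    have "(of_int ga * z + of_int de)^2 * (of_int A * w^2 + of_int B * w + of_int C) =
       of_int A * (w * (of_int ga * z + of_int de))^2 + of_int B * (w * (of_int ga * z + of_int de)) * (of_int ga * z + of_int de)
       + of_int C * (of_int ga * z + of_int de)^2"
      by (simp add: algebra_simps power2_eq_square)
    also have "\<dots> = of_int a' * z^2 + of_int b' * z + of_int c'"
      unfolding wd a'_def b'_def c'_def by (simp add: algebra_simps power2_eq_square)
    finally show ?thesis by simp
  qed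
  then have eqz: "of_int a' * z^2 + of_int b' * z + of_int c' = 0" using eqw by simp
  have ident: "a'*de^2 - b'*ga*de + c'*ga^2 = A*(al*de - be*ga)^2"
    unfolding a'_def b'_def c'_def by (simp add: algebra_simps power2_eq_square)
  show ?thesis
  proof (cases "a' = 0")
    case False then show ?thesis using eqz by blast
  next
    case True
    show ?thesis
    proof (cases "b' = 0")
      case False
      have "of_int b' * z + of_int c' = 0" using eqz True by simp
      then have "z = - of_int c' / of_int b'" using False by (simp add: field_simps)
      then have "z \<in> \<rat>" by simp
      then show ?thesis using zq by simp
    next
      case False2: True
      then have "c' = 0" using eqz True by simp
      then have "A*(al*de - be*ga)^2 = 0" using ident True False2 by simp
      then have "A = 0" using det by (simp add: power2_eq_square) (metis abs_0 zero_neq_one right_minus_eq)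
      then show ?thesis using A by simp
    qed
  qed
qed

lemma quad_back:
  assumes dn: "den d z \<noteq> 0" and qw: "quadratic_irrational (brf d z)"
  shows "quadratic_irrational z"
proof -
  have zq: "z \<notin> \<rat>" using qw brf_rat unfolding quadratic_irrational_def by blast
  obtain A B C :: int where A: "A \<noteq> 0" and e: "of_int A * (brf d z)^2 + of_int B * brf d z + of_int C = 0"
    using qw unfolding quadratic_irrational_def by blast
  have "\<exists>a b c :: int. a \<noteq> 0 \<and> of_int a * z^2 + of_int b * z + of_int c = 0"
    by (rule quad_mob[OF _ _ det_abs A e zq]) (use dn in \<open>simp_all add: den_def brf_def\<close>)
  then show ?thesis using zq unfolding quadratic_irrational_def by blast
qed

lemma det_abs_real: "\<bar>real_of_int (mA d) * real_of_int (mD d) - real_of_int (mB d) * real_of_int (mC d)\<bar> = 1"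
proof -
  have "\<bar>real_of_int (mA d * mD d - mB d * mC d)\<bar> = 1" using det_abs[of d] by (metis of_int_abs of_int_1)
  then show ?thesis by simp
qed

lemma brf_expand:
  assumes d: "OOCF_digit d" and u: "u \<in> OOCF_B d" and v: "v \<in> OOCF_B d"
  shows "\<bar>u - v\<bar> \<le> \<bar>brf d u - brf d v\<bar>"
    "d \<noteq> (2,-1) \<Longrightarrow> 2 * \<bar>u - v\<bar> \<le> \<bar>brf d u - brf d v\<bar>"
proof -
  note Du = den_facts[OF d u] and Dv = den_facts[OF d v]
  define P where "P = den d u * den d v"
  have P0: "P > 0" using Du Dv P_def by simp
  have "\<bar>brf d u - brf d v\<bar> = \<bar>u - v\<bar> / P"
    using brf_diff[of d u v] Du(1) Dv(1) det_abs_real[of d] P_def by (simp add: abs_mult abs_divide)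
  note eq = this
  have P1: "P \<le> 1" using Du Dv P_def by (simp add: mult_le_one)
  have "\<bar>u - v\<bar> * P \<le> \<bar>u - v\<bar>" using P1 P0 by (simp add: mult_left_le)
  then show "\<bar>u - v\<bar> \<le> \<bar>brf d u - brf d v\<bar>" using eq P0 by (simp add: le_divide_eq)
  assume nd: "d \<noteq> (2,-1)"
  have "P \<le> 1/2 * 1" unfolding P_def using Du(3)[OF nd] Du(1) Dv(1,2) by (intro mult_mono) auto
  then have "\<bar>u - v\<bar> * P * 2 \<le> \<bar>u - v\<bar>" using P0 by (simp add: mult_left_le mult.assoc)
  then show "2 * \<bar>u - v\<bar> \<le> \<bar>brf d u - brf d v\<bar>" using eq P0 by (simp add: le_divide_eq algebra_simps)
qed

lemma EXP:
  fixes u v :: "nat \<Rightarrow> real"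
  assumes H: "\<And>n. OOCF_digit (dd n) \<and> u n \<in> OOCF_B (dd n) \<and> v n \<in> OOCF_B (dd n)
              \<and> u (Suc n) = brf (dd n) (u n) \<and> v (Suc n) = brf (dd n) (v n)"
    and inf: "\<And>M. \<exists>n\<ge>M. dd n \<noteq> (2,-1)"
  shows "u 0 = v 0"
proof (rule ccontr)
  assume ne: "u 0 \<noteq> v 0"
  define g where "g n = \<bar>u n - v n\<bar>" for n
  have step: "g n \<le> g (Suc n)" for n using brf_expand(1)[of "dd n" "u n" "v n"] H[of n] g_def by simp
  have step2: "dd n \<noteq> (2,-1) \<Longrightarrow> 2 * g n \<le> g (Suc n)" for n
    using brf_expand(2)[of "dd n" "u n" "v n"] H[of n] g_def by simp
  have mono: "g n \<le> g (n + j)" for n j by (induction j) (auto intro: order_trans[OF _ step])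
  have bnd: "g n \<le> 1" for n
  proof -
    have "0 \<le> u n" "u n \<le> 1" "0 \<le> v n" "v n \<le> 1" using den_facts[of "dd n"] H[of n] by blast+
    then show ?thesis unfolding g_def by linarith
  qed
  have big: "\<exists>n. 2^c * g 0 \<le> g n" for c
  proof (induction c)
    case 0 then show ?case by auto
  next
    case (Suc c)
    then obtain n where n: "2^c * g 0 \<le> g n" by blast
    obtain m where m: "m \<ge> n" "dd m \<noteq> (2,-1)" using inf by blast
    have "g n \<le> g m" using mono[of n "m - n"] m by simp
    then have "2 * g n \<le> g (Suc m)" using step2[OF m(2)] by linarith
    then have "2^Suc c * g 0 \<le> g (Suc m)" using n by simp
    then show ?case by blast
  qed
  have g0: "g 0 > 0" using ne g_def by simp
  obtain c where c: "1 / g 0 < 2^c" using real_arch_pow[of 2 "1 / g 0"] by auto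
  obtain n where "2^c * g 0 \<le> g n" using big by blast
  moreover have "1 < 2^c * g 0" using c g0 by (simp add: field_simps)
  ultimately show False using bnd[of n] by linarith
qed

lemma exp_facts:
  assumes "is_OOCF_expansion x e"
  shows "OOCF_digit (e (Suc n))" "(OOCF_T ^^ n) x \<in> OOCF_B (e (Suc n))" "(OOCF_T ^^ n) x \<noteq> 1"
  using assms unfolding is_OOCF_expansion_def by (metis diff_Suc_1 le_add1 plus_1_eq_Suc)+

lemma T_step:
  assumes "is_OOCF_expansion x e"
  shows "(OOCF_T ^^ Suc n) x = brf (e (Suc n)) ((OOCF_T ^^ n) x)"
  using T_eq[OF exp_facts[OF assms]] by simp

lemma orbit_irr:
  assumes ex: "is_OOCF_expansion x e" and q: "x \<notin> \<rat>"
  shows "(OOCF_T ^^ n) x \<notin> \<rat>"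
proof (induction n)
  case 0 then show ?case using q by simp
next
  case (Suc n)
  have "den (e (Suc n)) ((OOCF_T ^^ n) x) \<noteq> 0"
    using den_facts(1)[OF exp_facts(1)[OF ex, of n] exp_facts(2)[OF ex, of n]] by simp
  then show ?case using rat_back Suc T_step[OF ex] by metis
qed

lemma brf21: "brf (2,-1) z = z / (1 - 2*z)"
  using brf_neg_form[of 2 1 z] by simp

lemma irr_inf:
  assumes ex: "is_OOCF_expansion x e" and q: "x \<notin> \<rat>"
  shows "\<exists>n\<ge>M. e (Suc n) \<noteq> (2,-1)"
proof (rule ccontr)
  assume "\<not> ?thesis"
  then have all: "\<And>n. n \<ge> M \<Longrightarrow> e (Suc n) = (2,-1)" by auto
  define z where "z j = (OOCF_T ^^ (M + j)) x" for j
  have zB: "z j \<in> OOCF_B (2,-1)" for j using exp_facts(2)[OF ex, of "M+j"] all[of "M+j"] z_def by simp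
  have zs: "z (Suc j) = z j / (1 - 2 * z j)" for j
    using T_step[OF ex, of "M+j"] all[of "M+j"] z_def brf21 by simp
  have dpos: "0 < 1 - 2 * z j" "1 - 2 * z j \<le> 1" "0 \<le> z j" "z j \<le> 1" for j
    using den_facts[of "(2,-1)" "z j"] zB[of j] den_facts[of "(2,-1)" "z j"]
    by (auto simp: OOCF_digit_def den_def mC_def mD_def)
  have z0: "z 0 > 0"
  proof -
    have "z 0 \<noteq> 0" using orbit_irr[OF ex q, of M] z_def by (metis Rats_0 add_0_right)
    then show ?thesis using dpos(3)[of 0] by simp
  qed
  have inc: "z j + 2 * (z j)^2 \<le> z (Suc j)" for j
  proof -
    have "(z j + 2 * (z j)^2) * (1 - 2 * z j) \<le> z j"
    proof -
      have "(z j + 2 * (z j)^2) * (1 - 2 * z j) = z j - 4 * (z j)^3" by (simp add: algebra_simps power2_eq_square power3_eq_cube)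
      moreover have "0 \<le> (z j)^3" using dpos(3)[of j] by simp
      ultimately show ?thesis by simp
    qed
    then show ?thesis using zs[of j] dpos(1)[of j] by (simp add: le_divide_eq)
  qed
  have grow: "z 0 \<le> z j \<and> z 0 + real j * (2 * (z 0)^2) \<le> z j" for j
  proof (induction j)
    case 0 then show ?case by simp
  next
    case (Suc j)
    have h: "(z 0)^2 \<le> (z j)^2" using Suc z0 by (intro power_mono) auto
    have A: "z 0 + real (Suc j) * (2*(z 0)^2) = (z 0 + real j * (2*(z 0)^2)) + 2*(z 0)^2"
      by (simp add: algebra_simps)
    have B: "0 \<le> (z j)^2" by simp
    show ?case using A B Suc.IH inc[of j] h by linarith
  qed
  obtain j :: nat where j: "1 / (2 * (z 0)^2) < real j" using reals_Archimedean2 by blast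
  have "1 < real j * (2 * (z 0)^2)" using j z0 by (simp add: field_simps)
  then show False using grow[of j] dpos(4)[of j] z0 by linarith
qed

lemma rat_step:
  assumes d: "OOCF_digit d" and z: "z \<in> OOCF_B d" and zp: "z > 0"
    and zq: "z = of_int p / of_int q" and op: "odd p" and oq: "odd q" and q0: "q > 0"
  shows "\<exists>P Q. odd P \<and> odd Q \<and> 0 < Q \<and> Q < q \<and> brf d z = of_int P / of_int Q"
proof -
  define P where "P = mA d * p + mB d * q"
  define Q where "Q = mC d * p + mD d * q"
  have qr: "real_of_int q > 0" using q0 by simp
  have QQ: "real_of_int Q = of_int q * den d z" using qr unfolding Q_def den_def zq by (simp add: field_simps)
  have PP: "real_of_int P = of_int q * (of_int (mA d) * z + of_int (mB d))" using qr unfolding P_def zq by (simp add: field_simps)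
  note D = den_facts[OF d z]
  have "real_of_int Q > 0" using QQ D(1) qr by simp
  then have Q0: "Q > 0" by simp
  have "real_of_int Q < of_int q" using QQ D(4)[OF zp] qr by simp
  then have Qq: "Q < q" by simp
  have br: "brf d z = of_int P / of_int Q" using PP QQ qr D(1) by (simp add: brf_def)
  have par: "odd P \<and> odd Q"
    using d proof (cases rule: digit_cases)
    case (1 a)
    then show ?thesis using op oq unfolding P_def Q_def by (simp add: mA_def mB_def mC_def mD_def even_mult_iff)
  next
    case (2 a)
    then show ?thesis using op oq unfolding P_def Q_def by (simp add: mA_def mB_def mC_def mD_def even_mult_iff)
  qed
  show ?thesis using par Q0 Qq br by blast
qed

lemma odd_odd_no_exp:
  assumes ex: "is_OOCF_expansion x e" and xq: "x = of_int p / of_int q"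
    and op: "odd p" and oq: "odd q" and q0: "q > 0"
  shows False
proof -
  have "\<exists>P Q. odd P \<and> odd Q \<and> 0 < Q \<and> Q + int n \<le> q \<and> (OOCF_T ^^ n) x = of_int P / of_int Q" for n
  proof (induction n)
    case 0 then show ?case using xq op oq q0 by auto
  next
    case (Suc n)
    then obtain P Q where PQ: "odd P" "odd Q" "0 < Q" "Q + int n \<le> q" "(OOCF_T ^^ n) x = of_int P / of_int Q" by blast
    note F = exp_facts[OF ex, of n]
    have "0 \<le> (OOCF_T ^^ n) x" using den_facts(5)[OF F(1,2)] .
    moreover have "(OOCF_T ^^ n) x \<noteq> 0" using PQ by (auto simp: odd_pos)
    ultimately have pos: "(OOCF_T ^^ n) x > 0" by simp
    obtain P' Q' where "odd P'" "odd Q'" "0 < Q'" "Q' < Q" "brf (e (Suc n)) ((OOCF_T ^^ n) x) = of_int P' / of_int Q'"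
      using rat_step[OF F(1,2) pos PQ(5,1,2,3)] by blast
    then show ?case using T_step[OF ex, of n] PQ(4) by (intro exI[of _ P'] exI[of _ Q']) auto
  qed
  from this[of "nat q"] q0 show False by auto
qed

lemma rat_case:
  assumes ex: "is_OOCF_expansion x e" and xq: "x \<in> \<rat>"
  shows "inf_rational x"
proof -
  obtain p q where pq: "q > 0" "coprime p q" "x = of_int p / of_int q" using Rats_cases'[OF xq] by blast
  show ?thesis
  proof (cases "odd (p + q)")
    case True then show ?thesis using pq unfolding inf_rational_def by blast
  next
    case False
    have "odd p \<or> odd q"
    proof (rule ccontr)
      assume "\<not> (odd p \<or> odd q)"
      then have "2 dvd p" "2 dvd q" by auto
      then have "2 dvd gcd p q" by simp
      then show False using pq(2) by simp
    qed
    then have "odd p" "odd q" using False by auto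
    then show ?thesis using odd_odd_no_exp[OF ex pq(3)] pq(1) by blast
  qed
qed

lemma mat_prod:
  fixes N n :: nat
  assumes ex: "is_OOCF_expansion x e"
  defines "y \<equiv> (OOCF_T ^^ N) x"
  shows "\<exists>a b c d :: int. (OOCF_T ^^ (N+n)) x * (of_int c * y + of_int d) = of_int a * y + of_int b
     \<and> 0 < \<bar>of_int c * y + of_int d\<bar> \<and> \<bar>of_int c * y + of_int d\<bar> \<le> 1
     \<and> ((\<exists>i<n. e (Suc (N+i)) \<noteq> (2,-1)) \<longrightarrow> \<bar>of_int c * y + of_int d\<bar> \<le> 1/2)"
proof (induction n)
  case 0
  show ?case by (rule exI[of _ 1], rule exI[of _ 0], rule exI[of _ 0], rule exI[of _ 1]) (simp add: y_def)
next
  case (Suc n)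
  then obtain a b c d :: int where H: "(OOCF_T ^^ (N+n)) x * (of_int c * y + of_int d) = of_int a * y + of_int b"
     "0 < \<bar>of_int c * y + of_int d\<bar>" "\<bar>of_int c * y + of_int d\<bar> \<le> 1"
     "(\<exists>i<n. e (Suc (N+i)) \<noteq> (2,-1)) \<longrightarrow> \<bar>of_int c * y + of_int d\<bar> \<le> 1/2" by blast
  define z where "z = (OOCF_T ^^ (N+n)) x"
  define dd where "dd = e (Suc (N+n))"
  note F = exp_facts[OF ex, of "N+n", folded dd_def z_def]
  note D = den_facts[OF F(1,2)]
  have Tz: "(OOCF_T ^^ (N + Suc n)) x = brf dd z" using T_step[OF ex, of "N+n"] dd_def z_def by simp
  define M where "M = of_int c * y + of_int d"
  have Mz: "z * M = of_int a * y + of_int b" using H(1) z_def M_def by simp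
  define c' where "c' = mC dd * a + mD dd * c"
  define d' where "d' = mC dd * b + mD dd * d"
  define a' where "a' = mA dd * a + mB dd * c"
  define b' where "b' = mA dd * b + mB dd * d"
  have e1: "of_int c' * y + of_int d' = M * den dd z"
  proof -
    have "of_int c' * y + of_int d' = of_int (mC dd) * (of_int a * y + of_int b) + of_int (mD dd) * M"
      unfolding c'_def d'_def M_def by (simp add: algebra_simps)
    also have "\<dots> = M * den dd z" unfolding Mz[symmetric] den_def by (simp add: algebra_simps)
    finally show ?thesis .
  qed
  have e2: "of_int a' * y + of_int b' = M * (of_int (mA dd) * z + of_int (mB dd))"
  proof -
    have "of_int a' * y + of_int b' = of_int (mA dd) * (of_int a * y + of_int b) + of_int (mB dd) * M"
      unfolding a'_def b'_def M_def by (simp add: algebra_simps)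
    also have "\<dots> = M * (of_int (mA dd) * z + of_int (mB dd))" unfolding Mz[symmetric] by (simp add: algebra_simps)
    finally show ?thesis .
  qed
  have e3: "(OOCF_T ^^ (N + Suc n)) x * (of_int c' * y + of_int d') = of_int a' * y + of_int b'"
    using Tz e1 e2 D(1) by (simp add: brf_def)
  have abs1: "\<bar>of_int c' * y + of_int d'\<bar> = \<bar>M\<bar> * den dd z" using e1 D(1) by (simp add: abs_mult)
  have p1: "0 < \<bar>of_int c' * y + of_int d'\<bar>" using abs1 H(2) D(1) M_def by simp
  have p2: "\<bar>of_int c' * y + of_int d'\<bar> \<le> \<bar>M\<bar>" using abs1 D(1,2) H(2) M_def by (simp add: mult_left_le)
  have p3: "\<bar>of_int c' * y + of_int d'\<bar> \<le> 1/2" if "\<exists>i<Suc n. e (Suc (N+i)) \<noteq> (2,-1)"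
  proof (cases "\<exists>i<n. e (Suc (N+i)) \<noteq> (2,-1)")
    case True then show ?thesis using H(4) p2 M_def by simp
  next
    case False
    then have "dd \<noteq> (2,-1)" using that dd_def less_Suc_eq by auto
    then have "den dd z \<le> 1/2" using D(3) by simp
    then have "\<bar>M\<bar> * den dd z \<le> 1 * (1/2)" using H(3) M_def D(1) by (intro mult_mono) auto
    then show ?thesis using abs1 by simp
  qed
  show ?case using e3 p1 p2 p3 H(3) M_def by (intro exI[of _ a'] exI[of _ b'] exI[of _ c'] exI[of _ d']) auto
qed

lemma quad_back_orbit:
  assumes ex: "is_OOCF_expansion x e"
  shows "quadratic_irrational ((OOCF_T ^^ n) x) \<Longrightarrow> quadratic_irrational x"
proof (induction n)
  case 0 then show ?case by simp
next
  case (Suc n)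
  have "den (e (Suc n)) ((OOCF_T ^^ n) x) \<noteq> 0"
    using den_facts(1)[OF exp_facts(1)[OF ex, of n] exp_facts(2)[OF ex, of n]] by simp
  then show ?case using quad_back Suc T_step[OF ex, of n] by metis
qed

lemma irr_periodic:
  assumes ex: "is_OOCF_expansion x e" and q: "x \<notin> \<rat>" and per: "eventually_periodic e"
  shows "quadratic_irrational x"
proof -
  obtain N p where p: "p > 0" and P: "\<And>n. n \<ge> N \<Longrightarrow> e (n + p) = e n"
    using per unfolding eventually_periodic_def by blast
  define y where "y = (OOCF_T ^^ N) x"
  have eqp: "(OOCF_T ^^ (N+0)) x = (OOCF_T ^^ (N+p+0)) x"
  proof (rule EXP[where u = "\<lambda>n. (OOCF_T ^^ (N+n)) x" and v = "\<lambda>n. (OOCF_T ^^ (N+p+n)) x"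
        and dd = "\<lambda>n. e (Suc (N+n))"])
    fix n
    have per1: "e (Suc (N+p+n)) = e (Suc (N+n))" using P[of "Suc (N+n)"] by (simp add: algebra_simps)
    show "OOCF_digit (e (Suc (N+n))) \<and> (OOCF_T ^^ (N+n)) x \<in> OOCF_B (e (Suc (N+n))) \<and>
         (OOCF_T ^^ (N+p+n)) x \<in> OOCF_B (e (Suc (N+n))) \<and>
         (OOCF_T ^^ (N+Suc n)) x = brf (e (Suc (N+n))) ((OOCF_T ^^ (N+n)) x) \<and>
         (OOCF_T ^^ (N+p+Suc n)) x = brf (e (Suc (N+n))) ((OOCF_T ^^ (N+p+n)) x)"
      using exp_facts[OF ex, of "N+n"] exp_facts(2)[OF ex, of "N+p+n"] per1
        T_step[OF ex, of "N+n"] T_step[OF ex, of "N+p+n"] by simp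
  next
    fix M
    obtain n where n: "n \<ge> N+M" "e (Suc n) \<noteq> (2,-1)" using irr_inf[OF ex q] by blast
    then show "\<exists>n\<ge>M. e (Suc (N+n)) \<noteq> (2,-1)" by (intro exI[of _ "n - N"]) auto
  qed
  have "(OOCF_T ^^ p) y = (OOCF_T ^^ (p+N)) x" by (simp add: y_def funpow_add)
  then have yp: "(OOCF_T ^^ p) y = y" using eqp by (simp add: add.commute y_def)
  have yjp: "(OOCF_T ^^ (N + j*p)) x = y" for j
  proof (induction j)
    case 0 then show ?case by (simp add: y_def)
  next
    case (Suc j)
    have "N + Suc j * p = p + (N + j*p)" by simp
    then have "(OOCF_T ^^ (N + Suc j * p)) x = (OOCF_T ^^ p) ((OOCF_T ^^ (N + j*p)) x)"
      by (simp only: funpow_add o_apply)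
    then show ?case using Suc yp by simp
  qed
  obtain i where i: "i \<ge> N" "e (Suc i) \<noteq> (2,-1)" using irr_inf[OF ex q, of N] by blast
  define L where "L = Suc i * p"
  have "Suc i * 1 \<le> Suc i * p" using p by (intro mult_le_mono2) simp
  then have "Suc i \<le> L" using L_def by simp
  then have iL: "i - N < L" by arith
  obtain a b c d :: int where M: "(OOCF_T ^^ (N+L)) x * (of_int c * y + of_int d) = of_int a * y + of_int b"
     "0 < \<bar>of_int c * y + of_int d\<bar>"
     "(\<exists>i<L. e (Suc (N+i)) \<noteq> (2,-1)) \<longrightarrow> \<bar>of_int c * y + of_int d\<bar> \<le> 1/2"
    using mat_prod[OF ex, of N L] y_def by blast
  have "\<exists>i'<L. e (Suc (N+i')) \<noteq> (2,-1)" using iL i by (intro exI[of _ "i - N"]) auto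
  then have half: "\<bar>of_int c * y + of_int d\<bar> \<le> 1/2" using M(3) by blast
  have fix1: "y * (of_int c * y + of_int d) = of_int a * y + of_int b" using M(1) yjp[of "Suc i"] L_def by simp
  have c0: "c \<noteq> 0"
  proof
    assume "c = 0"
    then have "0 < \<bar>real_of_int d\<bar>" "\<bar>real_of_int d\<bar> \<le> 1/2" using M(2) half by auto
    then have "0 < \<bar>d\<bar>" "2 * \<bar>d\<bar> \<le> 1" by linarith+
    then show False by linarith
  qed
  have yq: "y \<notin> \<rat>" using orbit_irr[OF ex q] y_def by simp
  have "of_int c * y^2 + of_int (d - a) * y + of_int (- b) = 0" using fix1 by (simp add: algebra_simps power2_eq_square)
  then have "quadratic_irrational y" using yq c0 unfolding quadratic_irrational_def by blast
  then show ?thesis using quad_back_orbit[OF ex] y_def by blast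
qed

fun orb :: "(nat \<Rightarrow> int \<times> int) \<Rightarrow> real \<Rightarrow> nat \<Rightarrow> real" where
  "orb dd s 0 = s"
| "orb dd s (Suc n) = brf (dd n) (orb dd s n)"

definition roots :: "int \<Rightarrow> int \<Rightarrow> int \<Rightarrow> real \<Rightarrow> real \<Rightarrow> bool" where
  "roots A B C x s \<longleftrightarrow> A \<noteq> 0 \<and> of_int A * (x + s) = - of_int B \<and> of_int A * x * s = of_int C"

lemma roots_irr:
  assumes "roots A B C x s" "x \<notin> \<rat>"
  shows "s \<notin> \<rat>" "s \<noteq> x"
proof -
  have A: "real_of_int A \<noteq> 0" and e: "of_int A * (x + s) = - of_int B" using assms(1) unfolding roots_def by auto
  then have s: "s = - of_int B / of_int A - x" by (simp add: field_simps)
  show "s \<notin> \<rat>"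
  proof
    assume "s \<in> \<rat>"
    then have "- of_int B / of_int A - s \<in> \<rat>" by simp
    moreover have "- of_int B / of_int A - s = x" using s by simp
    ultimately show False using assms(2) by simp
  qed
  show "s \<noteq> x"
  proof
    assume "s = x"
    then have "x = - of_int B / (2 * of_int A)" using e A by (simp add: field_simps)
    then have "x \<in> \<rat>" by simp
    then show False using assms(2) by simp
  qed
qed

lemma roots_step:
  assumes r: "roots A B C x s" and dx: "den d x \<noteq> 0" and ds: "den d s \<noteq> 0"
  shows "\<exists>A' B' C'. roots A' B' C' (brf d x) (brf d s) \<and> B'^2 - 4*A'*C' = B^2 - 4*A*C"
proof -
  define al where "al = mA d"
  define be where "be = mB d"
  define ga where "ga = mC d"
  define de where "de = mD d"
  define A' where "A' = A*de^2 - B*ga*de + C*ga^2"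
  define B' where "B' = -2*A*de*be + (al*de+be*ga)*B - 2*al*ga*C"
  define C' where "C' = A*be^2 - B*al*be + C*al^2"
  have hB: "real_of_int B = - of_int A * (x + s)" and hC: "real_of_int C = of_int A * x * s"
    and A0: "A \<noteq> 0" using r unfolding roots_def by auto
  have dx': "of_int ga * x + of_int de \<noteq> 0" and ds': "of_int ga * s + of_int de \<noteq> 0"
    using dx ds unfolding den_def ga_def de_def by auto
  have bx: "brf d x = (of_int al * x + of_int be) / (of_int ga * x + of_int de)"
   and bs: "brf d s = (of_int al * s + of_int be) / (of_int ga * s + of_int de)"
    unfolding brf_def den_def al_def be_def ga_def de_def by auto
  have rA: "real_of_int A' = of_int A * (of_int ga * x + of_int de) * (of_int ga * s + of_int de)"
    unfolding A'_def by (simp add: hB hC algebra_simps power2_eq_square)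
  have rB: "real_of_int B' = - of_int A * ((of_int al * x + of_int be) * (of_int ga * s + of_int de)
       + (of_int al * s + of_int be) * (of_int ga * x + of_int de))"
    unfolding B'_def by (simp add: hB hC algebra_simps power2_eq_square)
  have rC: "real_of_int C' = of_int A * (of_int al * x + of_int be) * (of_int al * s + of_int be)"
    unfolding C'_def by (simp add: hB hC algebra_simps power2_eq_square)
  have A'0: "A' \<noteq> 0"
  proof -
    have "real_of_int A' \<noteq> 0" using rA A0 dx' ds' by simp
    then show ?thesis by auto
  qed
  define X where "X = of_int ga * x + of_int de"
  define Y where "Y = of_int ga * s + of_int de"
  define NX where "NX = of_int al * x + of_int be"
  define NY where "NY = of_int al * s + of_int be"
  have X0: "X \<noteq> 0" and Y0: "Y \<noteq> 0" using dx' ds' X_def Y_def by auto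
  have Ax: "of_int A' * brf d x = of_int A * NX * Y"
    unfolding rA bx X_def[symmetric] Y_def[symmetric] NX_def[symmetric] using X0 by simp
  have As: "of_int A' * brf d s = of_int A * NY * X"
    unfolding rA bs X_def[symmetric] Y_def[symmetric] NY_def[symmetric] using Y0 by simp
  have R1: "of_int A' * (brf d x + brf d s) = - of_int B'"
    unfolding distrib_left Ax As rB X_def Y_def NX_def NY_def by (simp add: algebra_simps)
  have R2: "of_int A' * brf d x * brf d s = of_int C'"
    unfolding Ax rC bs Y_def[symmetric] NX_def[symmetric] NY_def[symmetric] using Y0 by simp
  have det: "(al*de - be*ga)^2 = 1"
  proof -
    have "\<bar>al*de - be*ga\<bar> = 1" using det_abs[of d] unfolding al_def be_def ga_def de_def .
    then show ?thesis by (metis abs_power2 power2_abs one_power2)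
  qed
  have "B'^2 - 4*A'*C' = (al*de - be*ga)^2 * (B^2 - 4*A*C)"
    unfolding A'_def B'_def C'_def by (simp add: algebra_simps power2_eq_square)
  then have "B'^2 - 4*A'*C' = B^2 - 4*A*C" using det by simp
  then show ?thesis using R1 R2 A'0 unfolding roots_def by blast
qed

lemma den_zero_rat:
  assumes "OOCF_digit d" "den d s = 0" shows "s \<in> \<rat>"
proof -
  have "mC d \<noteq> 0" using assms(1) by (cases rule: digit_cases) (auto simp: mC_def)
  then have "s = - of_int (mD d) / of_int (mC d)" using assms(2) unfolding den_def by (simp add: field_simps)
  then show ?thesis by simp
qed

lemma roots_bound:
  assumes r: "roots A B C x s" and x: "x > 0" and s: "s < 0"
  shows "\<bar>A\<bar> \<le> B^2 - 4*A*C \<and> \<bar>B\<bar> \<le> B^2 - 4*A*C \<and> \<bar>C\<bar> \<le> B^2 - 4*A*C"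
proof -
  have A0: "A \<noteq> 0" and hC: "real_of_int C = of_int A * x * s" using r unfolding roots_def by auto
  have "real_of_int (A*C) = (of_int A)^2 * (x * s)" using hC by (simp add: power2_eq_square algebra_simps)
  moreover have "(real_of_int A)^2 > 0" using A0 by simp
  moreover have "x * s < 0" using x s by (simp add: mult_pos_neg)
  ultimately have "real_of_int (A*C) < 0" by (simp add: mult_pos_neg)
  then have AC: "A*C < 0" by (metis of_int_0 of_int_less_iff)
  then have C0: "C \<noteq> 0" by auto
  have C1: "1 \<le> \<bar>C\<bar>" using C0 by arith
  have A1: "1 \<le> \<bar>A\<bar>" using A0 by arith
  have "\<bar>A\<bar> \<le> \<bar>A\<bar> * \<bar>C\<bar>" using C1 by (simp add: mult_le_cancel_left1)
  moreover have "\<bar>C\<bar> \<le> \<bar>A\<bar> * \<bar>C\<bar>" using A1 by (simp add: mult_le_cancel_right1)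
  moreover have "\<bar>A\<bar> * \<bar>C\<bar> = - (A*C)" using AC abs_of_neg[of "A*C"] by (simp add: abs_mult[symmetric])
  moreover have "\<bar>B\<bar> \<le> B^2"
  proof (cases "B = 0")
    case True then show ?thesis by simp
  next
    case False
    then have "1 \<le> \<bar>B\<bar>" by arith
    then have "\<bar>B\<bar> \<le> \<bar>B\<bar> * \<bar>B\<bar>" using mult_left_mono[of 1 "\<bar>B\<bar>" "\<bar>B\<bar>"] by simp
    moreover have "\<bar>B\<bar> * \<bar>B\<bar> = B^2" by (simp add: power2_eq_square abs_mult_self_eq)
    ultimately show ?thesis by simp
  qed
  moreover have "0 \<le> B^2" by simp
  ultimately show ?thesis using AC by linarith
qed

lemma same_roots:
  assumes "roots A B C u s" "roots A B C u' s'" "u > 0" "u' > 0" "s < 0" "s' < 0"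
  shows "u = u'"
proof -
  have A0: "real_of_int A \<noteq> 0" using assms(1) unfolding roots_def by simp
  have "of_int A * (u' - u) * (u' - s) = of_int A * u'^2 + of_int B * u' + of_int C"
  proof -
    have hB: "real_of_int B = - of_int A * (u + s)" and hC: "real_of_int C = of_int A * u * s"
      using assms(1) unfolding roots_def by auto
    show ?thesis unfolding hB hC by (simp add: algebra_simps power2_eq_square)
  qed
  also have "\<dots> = 0"
  proof -
    have hB: "real_of_int B = - of_int A * (u' + s')" and hC: "real_of_int C = of_int A * u' * s'"
      using assms(2) unfolding roots_def by auto
    show ?thesis unfolding hB hC by (simp add: algebra_simps power2_eq_square)
  qed
  finally have "(u' - u) * (u' - s) = 0" using A0 by simp
  moreover have "u' - s \<noteq> 0" using assms by simp
  ultimately show ?thesis by simp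
qed

lemma part2:
  assumes x01: "x \<in> {0<..<1}" and qi: "quadratic_irrational x" and ex: "is_OOCF_expansion x e"
  shows "eventually_periodic e"
proof -
  have xq: "x \<notin> \<rat>" using qi unfolding quadratic_irrational_def by blast
  obtain a b c :: int where a0: "a \<noteq> 0" and eq: "of_int a * x^2 + of_int b * x + of_int c = 0"
    using qi unfolding quadratic_irrational_def by blast
  define s0 where "s0 = - of_int b / of_int a - x"
  have r0: "roots a b c x s0"
  proof -
    have ar: "real_of_int a \<noteq> 0" using a0 by simp
    have "of_int a * (x + s0) = - of_int b" using ar unfolding s0_def by (simp add: field_simps)
    moreover have "of_int a * x * s0 = of_int c"
    proof -
      have "of_int a * x * s0 = - of_int b * x - of_int a * x^2" using ar unfolding s0_def
        by (simp add: field_simps power2_eq_square)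
      then show ?thesis using eq by simp
    qed
    ultimately show ?thesis using a0 unfolding roots_def by blast
  qed
  define xs where "xs n = (OOCF_T ^^ n) x" for n
  define dd where "dd n = e (Suc n)" for n
  define ss where "ss n = orb dd s0 n" for n
  define \<Delta> where "\<Delta> = b^2 - 4*a*c"
  have xsq: "xs n \<notin> \<rat>" for n using orbit_irr[OF ex xq] xs_def by simp
  have xs_suc: "xs (Suc n) = brf (dd n) (xs n)" for n using T_step[OF ex] xs_def dd_def by simp
  have ss_suc: "ss (Suc n) = brf (dd n) (ss n)" for n using ss_def by simp
  have DB: "OOCF_digit (dd n)" "xs n \<in> OOCF_B (dd n)" for n using exp_facts[OF ex] xs_def dd_def by auto
  have inv: "\<exists>A B C. roots A B C (xs n) (ss n) \<and> B^2 - 4*A*C = \<Delta>" for n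
  proof (induction n)
    case 0 then show ?case using r0 xs_def ss_def \<Delta>_def by auto
  next
    case (Suc n)
    then obtain A B C where r: "roots A B C (xs n) (ss n)" "B^2 - 4*A*C = \<Delta>" by blast
    have d1: "den (dd n) (xs n) \<noteq> 0" using den_facts(1)[OF DB] by (metis less_irrefl)
    have d2: "den (dd n) (ss n) \<noteq> 0" using den_zero_rat[OF DB(1)] roots_irr(1)[OF r(1) xsq] by blast
    obtain A' B' C' where r': "roots A' B' C' (brf (dd n) (xs n)) (brf (dd n) (ss n))" "B'^2-4*A'*C' = B^2-4*A*C"
      using roots_step[OF r(1) d1 d2] by blast
    then show ?case using r(2) unfolding xs_suc ss_suc by auto
  qed
  have neg: "\<exists>n0. \<forall>n\<ge>n0. ss n < 0"
  proof (cases "\<forall>n. ss n \<in> OOCF_B (dd n)")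
    case True
    have "xs 0 = ss 0"
    proof (rule EXP[where dd = dd])
      fix n show "OOCF_digit (dd n) \<and> xs n \<in> OOCF_B (dd n) \<and> ss n \<in> OOCF_B (dd n) \<and>
        xs (Suc n) = brf (dd n) (xs n) \<and> ss (Suc n) = brf (dd n) (ss n)"
        using DB True xs_suc ss_suc by blast
    next
      fix M show "\<exists>n\<ge>M. dd n \<noteq> (2,-1)" using irr_inf[OF ex xq, of M] dd_def by simp
    qed
    then have "x = s0" using xs_def ss_def by simp
    then show ?thesis using roots_irr(2)[OF r0 xq] by simp
  next
    case False
    then obtain n where n: "ss n \<notin> OOCF_B (dd n)" by blast
    have sn: "ss (Suc n) < 0 \<or> ss (Suc n) > 1"
    proof (cases "0 \<le> ss n \<and> ss n \<le> 1")
      case True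
      obtain A B C where r: "roots A B C (xs n) (ss n)" using inv by blast
      have "den (dd n) (ss n) \<noteq> 0" using den_zero_rat[OF DB(1)] roots_irr(1)[OF r xsq] by blast
      then show ?thesis using out2[OF DB(1) _ _ n] True ss_suc by simp
    next
      case False
      then have "ss n < 0 \<or> ss n > 1" by linarith
      then have "brf (dd n) (ss n) < 0" using out1(1)[OF DB(1)] by blast
      then show ?thesis using ss_suc by simp
    qed
    have "ss (Suc (Suc n) + j) < 0" for j
    proof (induction j)
      case 0 then show ?case using out1(1)[OF DB(1) sn] ss_suc by simp
    next
      case (Suc j) then show ?case using out1(1)[OF DB(1), of "ss (Suc (Suc n) + j)"] ss_suc by simp
    qed
    then have "\<forall>m\<ge>Suc (Suc n). ss m < 0" by (auto dest!: le_Suc_ex)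
    then show ?thesis by blast
  qed
  then obtain n0 where n0: "\<And>n. n \<ge> n0 \<Longrightarrow> ss n < 0" by blast
  have "\<forall>n. \<exists>t. case t of (A, B, C) \<Rightarrow> roots A B C (xs n) (ss n) \<and> B^2 - 4*A*C = \<Delta>"
    using inv by auto
  then have "\<exists>f. \<forall>n. case f n of (A, B, C) \<Rightarrow> roots A B C (xs n) (ss n) \<and> B^2 - 4*A*C = \<Delta>"
    by (rule choice)
  then obtain f where f: "\<And>n. case f n of (A, B, C) \<Rightarrow> roots A B C (xs n) (ss n) \<and> B^2 - 4*A*C = \<Delta>"
    by blast
  have xpos: "xs n > 0" for n
  proof -
    have "0 \<le> xs n" using den_facts(5)[OF DB] .
    moreover have "xs n \<noteq> 0" using xsq[of n] by auto
    ultimately show ?thesis by simp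
  qed
  define box where "box = {-\<Delta>..\<Delta>} \<times> {-\<Delta>..\<Delta>} \<times> {-\<Delta>..\<Delta>}"
  have fin: "finite box" unfolding box_def by simp
  have inbox: "f n \<in> box" if "n \<ge> n0" for n
  proof -
    obtain A B C where fn: "f n = (A,B,C)" by (cases "f n") auto
    then have r: "roots A B C (xs n) (ss n)" "B^2 - 4*A*C = \<Delta>" using f[of n] by auto
    have "\<bar>A\<bar> \<le> \<Delta> \<and> \<bar>B\<bar> \<le> \<Delta> \<and> \<bar>C\<bar> \<le> \<Delta>" using roots_bound[OF r(1) xpos n0[OF that]] r(2) by simp
    then show ?thesis unfolding box_def fn by auto
  qed
  have "\<not> inj_on f {n0..}"
  proof
    assume inj: "inj_on f {n0..}"
    have "finite (f ` {n0..})" using fin inbox by (auto intro: finite_subset)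
    then have "finite {n0..}" using finite_imageD inj by blast
    then show False using infinite_Ici by blast
  qed
  then obtain n m where nm: "n \<ge> n0" "m \<ge> n0" "n \<noteq> m" "f n = f m" unfolding inj_on_def by auto
  have eqx: "xs n = xs m"
  proof -
    obtain A B C where fn: "f n = (A,B,C)" by (cases "f n") auto
    have r1: "roots A B C (xs n) (ss n)" using f[of n] fn by auto
    have r2: "roots A B C (xs m) (ss m)" using f[of m] fn nm(4) by auto
    show ?thesis using same_roots[OF r1 r2 xpos xpos n0 n0] nm by simp
  qed
  define n1 where "n1 = min n m"
  define m1 where "m1 = max n m"
  have n1m1: "n1 < m1" "xs n1 = xs m1" using nm eqx n1_def m1_def by (auto simp: min_def max_def)
  have shift: "xs (n1 + j) = xs (m1 + j)" for j
  proof -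
    have "xs (n1 + j) = (OOCF_T ^^ j) (xs n1)" unfolding xs_def by (simp add: funpow_add add.commute)
    also have "\<dots> = (OOCF_T ^^ j) (xs m1)" using n1m1 by simp
    also have "\<dots> = xs (m1 + j)" unfolding xs_def by (simp add: funpow_add add.commute)
    finally show ?thesis .
  qed
  have eqe: "e (Suc (n1 + j)) = e (Suc (m1 + j))" for j
    using digit_unique[OF DB(1)[of "n1+j"] DB(1)[of "m1+j"] DB(2)[of "n1+j"] _ xsq[of "n1+j"]]
      DB(2)[of "m1+j"] shift[of j] dd_def by simp
  have per: "e (k + (m1 - n1)) = e k" if k: "k \<ge> Suc n1" for k
  proof -
    define j where "j = k - Suc n1"
    have "k = Suc (n1 + j)" "k + (m1 - n1) = Suc (m1 + j)" using k n1m1 j_def by auto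
    then show "e (k + (m1 - n1)) = e k" using eqe[of j] by (simp add: add.commute)
  qed
  have "m1 - n1 > 0" using n1m1 by simp
  then show ?thesis unfolding eventually_periodic_def using per by blast
qed

theorem theorem1p2:
  shows "(\<forall>x e. x \<in> {0..1} \<and> is_OOCF_expansion x e \<and> eventually_periodic e
            \<longrightarrow> inf_rational x \<or> quadratic_irrational x)
       \<and> (\<forall>x e. x \<in> {0<..<1} \<and> quadratic_irrational x \<and> is_OOCF_expansion x e
            \<longrightarrow> eventually_periodic e)"
  using rat_case irr_periodic part2 by blast

end
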